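(* Let $d\ge 1$ and let $\lambda=(\lambda_1,\dots,\lambda_d)$ be a vector of positive integers with $\sum_{i=1}^d\lambda_i=n\ge 2$. For each integer $b$ with $0\le b<n-1$, the point \[ p(b)=\left(\left(\sum_{i=1}^d\left\lceil \frac{b\lambda_i}{n-1}\right\rceil\right)-b,\; \left\lceil \frac{b\lambda_1}{n-1}\right\rceil,\;\dots,\;\left\lceil \frac{b\lambda_d}{n-1}\right\rceil\right)\in\mathbb{Z}^{d+1} \] lies in $\Pi_\lambda$, the points $p(0),\dots,p(n-2)$ are distinct, and every point of $\Pi_\lambda\cap\mathbb{Z}^{d+1}$ is of the form $p(b)$ for some $0\le b<n-1$. That is, $b\mapsto p(b)$ is a bijection from $\{0,1,\dots,n-2\}$ onto $\Pi_\lambda\cap\mathbb{Z}^{d+1}$.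
   Context: $e_1,\dots,e_d$ are the standard basis vectors of $\mathbb{R}^d$, and $\Delta_\lambda=\mathrm{conv}(e_1,\dots,e_d,\lambda)\subset\mathbb{R}^d$. The fundamental parallelepiped of $\Delta_\lambda$ is $\Pi_\lambda=\left\{\sum_{i=1}^d\gamma_i(1,e_i)+\gamma_{d+1}(1,\lambda): 0\le\gamma_i<1 \text{ for all } i\right\}\subset\mathbb{R}^{d+1}$. *)

theory Defs
  imports Complex_Main
begin

text \<open>Points of R^(d+1) are represented as functions nat => real with coordinates
  indexed 0..d (coordinate 0 is the extra "height" coordinate) and value 0 elsewhere.
  The vector lambda in Z^d is a function nat => nat, used on indices 1..d.\<close>

definition fund_par :: "nat \<Rightarrow> (nat \<Rightarrow> nat) \<Rightarrow> (nat \<Rightarrow> real) set" where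
  "fund_par d lam = {x. \<exists>\<gamma> :: nat \<Rightarrow> real.
      (\<forall>i\<in>{1..d+1}. 0 \<le> \<gamma> i \<and> \<gamma> i < 1) \<and>
      x = (\<lambda>j. if j = 0 then (\<Sum>i=1..d+1. \<gamma> i)
               else if j \<le> d then \<gamma> j + \<gamma> (d+1) * real (lam j)
               else 0)}"

definition int_points :: "nat \<Rightarrow> (nat \<Rightarrow> real) set" where
  "int_points d = {x. (\<forall>j\<le>d. x j \<in> \<int>) \<and> (\<forall>j>d. x j = 0)}"

definition pt :: "nat \<Rightarrow> (nat \<Rightarrow> nat) \<Rightarrow> nat \<Rightarrow> (nat \<Rightarrow> real)" where
  "pt d lam b = (let n = (\<Sum>i=1..d. lam i);
                    c = (\<lambda>i. \<lceil>real b * real (lam i) / real (n - 1)\<rceil>) in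
     (\<lambda>j. if j = 0 then real_of_int ((\<Sum>i=1..d. c i) - int b)
          else if j \<le> d then real_of_int (c j) else 0))"

end

theory Submission
  imports Defs
begin

lemma pt_in:
  fixes d :: nat and lam :: "nat \<Rightarrow> nat" and n b :: nat
  assumes n: "n = (\<Sum>i=1..d. lam i)" and n2: "n \<ge> 2" and b: "b < n - 1"
  shows "pt d lam b \<in> fund_par d lam \<inter> int_points d"
proof -
  define N where "N = real (n - 1)"
  have Npos: "N > 0" using n2 by (simp add: N_def)
  define c where "c = (\<lambda>i. \<lceil>real b * real (lam i) / N\<rceil>)"
  define g where "g = (\<lambda>i. if i = d+1 then real b / N else of_int (c i) - real b * real (lam i) / N)"
  have ptx: "pt d lam b = (\<lambda>j. if j = 0 then real_of_int ((\<Sum>i=1..d. c i) - int b)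
          else if j \<le> d then real_of_int (c j) else 0)"
    unfolding pt_def Let_def c_def N_def n[symmetric] by simp
  have g1: "\<forall>i\<in>{1..d+1}. 0 \<le> g i \<and> g i < 1"
  proof
    fix i assume "i \<in> {1..d+1}"
    show "0 \<le> g i \<and> g i < 1"
    proof (cases "i = d+1")
      case True
      have "real b < N" using b by (simp add: N_def less_diff_conv of_nat_diff)
      then show ?thesis using True Npos by (simp add: g_def)
    next
      case False
      have "of_int (c i) - 1 < real b * real (lam i) / N" "real b * real (lam i) / N \<le> of_int (c i)"
        unfolding c_def by linarith+
      then show ?thesis using False by (simp add: g_def)
    qed
  qed
  have s1: "(\<Sum>i=1..d+1. g i) = (\<Sum>i=1..d. g i) + real b / N"
    by (simp add: g_def)
  have s2: "(\<Sum>i=1..d. g i) = (\<Sum>i=1..d. of_int (c i)) - (\<Sum>i=1..d. real b * real (lam i) / N)"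
    by (simp add: g_def sum_subtractf)
  have s3: "(\<Sum>i=1..d. real b * real (lam i) / N) = real b * real n / N"
    using n by (simp add: sum_divide_distrib[symmetric] sum_distrib_left[symmetric])
  have Nn: "real n = N + 1" using n2 by (simp add: N_def of_nat_diff)
  have s4: "real b * real n / N - real b / N = real b"
    using Npos Nn by (simp add: field_simps)
  have sumg: "(\<Sum>i=1..d+1. g i) = real_of_int ((\<Sum>i=1..d. c i) - int b)"
    using s1 s2 s3 s4 by simp
  have "pt d lam b = (\<lambda>j. if j = 0 then (\<Sum>i=1..d+1. g i)
               else if j \<le> d then g j + g (d+1) * real (lam j) else 0)"
    unfolding ptx sumg using Npos by (auto simp: g_def)
  with g1 have "pt d lam b \<in> fund_par d lam" unfolding fund_par_def by blast
  moreover have "pt d lam b \<in> int_points d" unfolding ptx int_points_def by auto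
  ultimately show ?thesis by blast
qed

lemma pt_inj:
  fixes d :: nat and lam :: "nat \<Rightarrow> nat"
  shows "inj_on (pt d lam) A"
proof
  fix a b assume "a \<in> A" "b \<in> A" and e: "pt d lam a = pt d lam b"
  have key: "(\<Sum>j=1..d. pt d lam x j) - pt d lam x 0 = real x" for x
    unfolding pt_def Let_def by simp
  from key[of a] key[of b] e show "a = b" by simp
qed

lemma pt_surj:
  fixes d :: nat and lam :: "nat \<Rightarrow> nat" and n :: nat
  assumes n: "n = (\<Sum>i=1..d. lam i)" and n2: "n \<ge> 2"
    and x: "x \<in> fund_par d lam \<inter> int_points d"
  shows "x \<in> pt d lam ` {0..<n-1}"
proof -
  define N where "N = real (n - 1)"
  have Npos: "N > 0" using n2 by (simp add: N_def)
  have Nn: "real n = N + 1" using n2 by (simp add: N_def of_nat_diff)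
  obtain g :: "nat \<Rightarrow> real" where g1: "\<forall>i\<in>{1..d+1}. 0 \<le> g i \<and> g i < 1" and
    xd: "x = (\<lambda>j. if j = 0 then (\<Sum>i=1..d+1. g i)
               else if j \<le> d then g j + g (d+1) * real (lam j) else 0)"
    using x unfolding fund_par_def by blast
  have xi: "\<forall>j\<le>d. x j \<in> \<int>" using x unfolding int_points_def by blast
  define t where "t = g (d+1)"
  have t01: "0 \<le> t" "t < 1" using g1 by (auto simp: t_def)
  define m where "m = (\<lambda>j. \<lfloor>x j\<rfloor>)"
  have xm: "x j = of_int (m j)" if "j \<le> d" for j
    using xi that unfolding m_def by (metis Ints_cases floor_of_int)
  have mc: "m j = \<lceil>t * real (lam j)\<rceil>" and gj: "g j = of_int (m j) - t * real (lam j)"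
    if "j \<in> {1..d}" for j
  proof -
    have "x j = g j + t * real (lam j)" using that xd by (simp add: t_def)
    then have e: "of_int (m j) = g j + t * real (lam j)" using xm that by simp
    have "0 \<le> g j" "g j < 1" using g1 that by auto
    with e show "m j = \<lceil>t * real (lam j)\<rceil>"
      by (intro ceiling_unique[symmetric]) linarith+
    from e show "g j = of_int (m j) - t * real (lam j)" by simp
  qed
  have x0: "x 0 = (\<Sum>i=1..d. of_int (m i)) - t * N"
  proof -
    have "x 0 = (\<Sum>i=1..d. g i) + t" using xd by (simp add: t_def)
    also have "(\<Sum>i=1..d. g i) = (\<Sum>i=1..d. of_int (m i) - t * real (lam i))"
      using gj by (intro sum.cong) auto
    also have "\<dots> = (\<Sum>i=1..d. of_int (m i)) - t * real n"
      using n by (simp add: sum_subtractf sum_distrib_left)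
    finally show ?thesis using Nn by (simp add: algebra_simps)
  qed
  have "x 0 \<in> \<int>" using xi by simp
  then obtain k where k: "x 0 = of_int k" by (metis Ints_cases)
  define bi where "bi = (\<Sum>i=1..d. m i) - k"
  have tb: "t * N = of_int bi" using x0 k by (simp add: bi_def)
  have bi0: "bi \<ge> 0" using tb t01 Npos
    by (metis mult_nonneg_nonneg less_le of_int_0_le_iff)
  have "t * N < 1 * N" using t01 Npos by (intro mult_strict_right_mono) auto
  then have "of_int bi < N" using tb by simp
  then have bi1: "bi < int (n - 1)" unfolding N_def by linarith
  define b where "b = nat bi"
  have bB: "b \<in> {0..<n-1}" using bi0 bi1 by (simp add: b_def)
  have tdef: "t = real b / N" using tb bi0 Npos by (simp add: b_def field_simps)
  have "x = pt d lam b"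
  proof
    fix j
    show "x j = pt d lam b j"
    proof (cases "j = 0")
      case True
      have "(\<Sum>i=1..d. m i) = (\<Sum>i=1..d. \<lceil>real b * real (lam i) / N\<rceil>)"
        using mc tdef by (intro sum.cong) auto
      then show ?thesis using True x0 tb bi0 unfolding pt_def Let_def N_def[symmetric] n[symmetric]
        by (simp add: b_def flip: of_int_sum)
    next
      case False
      show ?thesis
      proof (cases "j \<le> d")
        case True
        then have "j \<in> {1..d}" using False by auto
        then show ?thesis using xm[of j] mc[of j] True False tdef
          unfolding pt_def Let_def N_def[symmetric] n[symmetric] by simp
      next
        case False
        then show ?thesis using xd \<open>j \<noteq> 0\<close> unfolding pt_def Let_def by simp
      qed
    qed
  qed
  with bB show ?thesis by blast
qed

theorem proposition2p12:
  fixes d :: nat and lam :: "nat \<Rightarrow> nat" and n :: nat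
  assumes "d \<ge> 1"
    and "\<forall>i\<in>{1..d}. lam i > 0"
    and "n = (\<Sum>i=1..d. lam i)"
    and "n \<ge> 2"
  shows "bij_betw (pt d lam) {0..<n-1} (fund_par d lam \<inter> int_points d)"
  unfolding bij_betw_def
  using pt_inj pt_in[OF assms(3,4)] pt_surj[OF assms(3,4)] by auto

end
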